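(* Let $\mathbb Q$ be the rationals and $D$ an uncountable set disjoint from $\mathbb Q$. Let $X=\mathbb Q\cup D$ with the topology in which every point of $D$ is isolated and a neighborhood base at $q\in\mathbb Q$ consists of the sets $I\cup (D\setminus C)$, where $I\subseteq\mathbb Q$ is a Euclidean open neighborhood of $q$ in $\mathbb Q$ and $C\subseteq D$ is countable. Then $X$ is a $T_1$-space, the strong Choquet game $Ch(X)$ is $\alpha$-favorable (indeed $\alpha$ has a winning strategy depending only on $\beta$'s last move), and $X$ has no rich family of Baire spaces; in fact, every separable subspace $S$ of $X$ with $\mathbb Q\subseteq S$ is not a Baire space.
   Context: A topological space is a Baire space if every countable intersection of dense open subsets is dense. The strong Choquet game $Ch(X)$: players $\beta$ and $\alpha$ alternate, $\beta$ first; at round $n$, $\beta$ chooses a point $x_n$ and an open set $V_n\ni x_n$ (with $V_n\subseteq U_{n-1}$ if $n\ge1$), then $\alpha$ chooses an open $U_n$ with $x_n\in U_n\subseteq V_n$; $\alpha$ wins if $\bigcap_n U_n\neq\emptyset$. $Ch(X)$ is $\alpha$-favorable if $\alpha$ has a winning strategy. A rich family of Baire spaces for $X$ is a family $\mathcal F$ of nonempty separable closed Baire subspaces of $X$ such that every separable subset of $X$ is contained in some $F\in\mathcal F$, and $\overline{\bigcup_{n<\omega}F_n}\in\mathcal F$ whenever $\{F_n:n<\omega\}\subseteq\mathcal F$. *)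

theory Defs
  imports "HOL-Analysis.Analysis"
begin

text \<open>Baire space: every countable intersection of dense open subsets is dense.
  (A countable family is given as a sequence; finite and empty families are covered
  by repetition resp. the convention that the empty intersection is the whole space.)\<close>
definition baire_space :: "'a topology \<Rightarrow> bool" where
  "baire_space X \<longleftrightarrow>
     (\<forall>G :: nat \<Rightarrow> 'a set.
        (\<forall>n. openin X (G n) \<and> X closure_of (G n) = topspace X) \<longrightarrow>
        X closure_of (topspace X \<inter> (\<Inter>n. G n)) = topspace X)"

text \<open>A strategy for alpha maps the finite history of beta's moves
  (x_0,V_0),...,(x_n,V_n) to alpha's answer U_n (alpha's own earlier moves are determined
  by the strategy).\<close>
definition choquet_alpha_winning :: "'a topology \<Rightarrow> (('a \<times> 'a set) list \<Rightarrow> 'a set) \<Rightarrow> bool" where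
  "choquet_alpha_winning X \<sigma> \<longleftrightarrow>
     (\<forall>h x V. openin X V \<and> x \<in> V \<longrightarrow>
        openin X (\<sigma> (h @ [(x, V)])) \<and> x \<in> \<sigma> (h @ [(x, V)]) \<and> \<sigma> (h @ [(x, V)]) \<subseteq> V) \<and>
     (\<forall>(x :: nat \<Rightarrow> 'a) (V :: nat \<Rightarrow> 'a set).
        (\<forall>n. openin X (V n) \<and> x n \<in> V n) \<and>
        (\<forall>n. V (Suc n) \<subseteq> \<sigma> (map (\<lambda>i. (x i, V i)) [0..<Suc n])) \<longrightarrow>
        (\<Inter>n. \<sigma> (map (\<lambda>i. (x i, V i)) [0..<Suc n])) \<noteq> {})"

definition strong_choquet_alpha_favorable :: "'a topology \<Rightarrow> bool" where
  "strong_choquet_alpha_favorable X \<longleftrightarrow> (\<exists>\<sigma>. choquet_alpha_winning X \<sigma>)"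

definition strong_choquet_alpha_last_move_favorable :: "'a topology \<Rightarrow> bool" where
  "strong_choquet_alpha_last_move_favorable X \<longleftrightarrow>
     (\<exists>\<tau> :: 'a \<Rightarrow> 'a set \<Rightarrow> 'a set.
        choquet_alpha_winning X (\<lambda>h. \<tau> (fst (last h)) (snd (last h))))"

definition rich_family_of_Baire :: "'a topology \<Rightarrow> 'a set set \<Rightarrow> bool" where
  "rich_family_of_Baire X \<F> \<longleftrightarrow>
     (\<forall>F\<in>\<F>. F \<noteq> {} \<and> closedin X F \<and> separable_space (subtopology X F)
              \<and> baire_space (subtopology X F)) \<and>
     (\<forall>S. S \<subseteq> topspace X \<and> separable_space (subtopology X S) \<longrightarrow> (\<exists>F\<in>\<F>. S \<subseteq> F)) \<and>
     (\<forall>Fs :: nat \<Rightarrow> 'a set. range Fs \<subseteq> \<F> \<longrightarrow> X closure_of (\<Union>n. Fs n) \<in> \<F>)"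

text \<open>The space X = Q \<union> D, realised as the disjoint sum: rationals are Inl q, points of D
  are Inr d.\<close>
definition QD_open :: "'d set \<Rightarrow> (rat + 'd) set \<Rightarrow> bool" where
  "QD_open D U \<longleftrightarrow>
     U \<subseteq> range Inl \<union> Inr ` D \<and>
     (\<forall>q. Inl q \<in> U \<longrightarrow>
        (\<exists>W :: real set. \<exists>C. open W \<and> real_of_rat q \<in> W \<and> countable C \<and> C \<subseteq> D \<and>
           Inl ` {r. real_of_rat r \<in> W} \<union> Inr ` (D - C) \<subseteq> U))"

definition QD_topology :: "'d set \<Rightarrow> (rat + 'd) topology" where
  "QD_topology D = topology (QD_open D)"

end

theory Submission
  imports Defs
begin

lemma QD_openD1: "QD_open D U \<Longrightarrow> U \<subseteq> range Inl \<union> Inr ` D"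
  unfolding QD_open_def by (rule conjunct1)

lemma QD_openD2:
  assumes "QD_open D U" "Inl q \<in> U"
  obtains W C where "open W" "real_of_rat q \<in> W" "countable C" "C \<subseteq> D"
    "Inl ` {r. real_of_rat r \<in> W} \<union> Inr ` (D - C) \<subseteq> U"
proof -
  have "\<forall>q. Inl q \<in> U \<longrightarrow> (\<exists>W :: real set. \<exists>C. open W \<and> real_of_rat q \<in> W \<and> countable C \<and> C \<subseteq> D \<and>
           Inl ` {r. real_of_rat r \<in> W} \<union> Inr ` (D - C) \<subseteq> U)"
    using assms(1) unfolding QD_open_def by (rule conjunct2)
  then have "\<exists>W :: real set. \<exists>C. open W \<and> real_of_rat q \<in> W \<and> countable C \<and> C \<subseteq> D \<and>
           Inl ` {r. real_of_rat r \<in> W} \<union> Inr ` (D - C) \<subseteq> U"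
    using assms(2) by simp
  then show ?thesis using that by metis
qed

lemma QD_openI:
  assumes "U \<subseteq> range Inl \<union> Inr ` D"
    "\<And>q. Inl q \<in> U \<Longrightarrow> \<exists>W C. open W \<and> real_of_rat q \<in> W \<and> countable C \<and> C \<subseteq> D \<and>
           Inl ` {r. real_of_rat r \<in> W} \<union> Inr ` (D - C) \<subseteq> U"
  shows "QD_open D U"
  unfolding QD_open_def using assms by simp

lemma QD_istopology: "istopology (QD_open D)"
  unfolding istopology_def
proof (intro conjI allI impI)
  fix S T assume S: "QD_open D S" and T: "QD_open D T"
  show "QD_open D (S \<inter> T)"
  proof (rule QD_openI)
    show "S \<inter> T \<subseteq> range Inl \<union> Inr ` D" using QD_openD1[OF S] by blast
    fix q assume q: "Inl q \<in> S \<inter> T"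
    obtain W1 C1 where 1: "open W1" "real_of_rat q \<in> W1" "countable C1" "C1 \<subseteq> D"
       "Inl ` {r. real_of_rat r \<in> W1} \<union> Inr ` (D - C1) \<subseteq> S"
      using QD_openD2[OF S] q by blast
    obtain W2 C2 where 2: "open W2" "real_of_rat q \<in> W2" "countable C2" "C2 \<subseteq> D"
       "Inl ` {r. real_of_rat r \<in> W2} \<union> Inr ` (D - C2) \<subseteq> T"
      using QD_openD2[OF T] q by blast
    have "Inl ` {r. real_of_rat r \<in> W1 \<inter> W2} \<union> Inr ` (D - (C1 \<union> C2)) \<subseteq> S \<inter> T"
      using 1(5) 2(5) by blast
    then show "\<exists>W C. open W \<and> real_of_rat q \<in> W \<and> countable C \<and> C \<subseteq> D \<and>
           Inl ` {r. real_of_rat r \<in> W} \<union> Inr ` (D - C) \<subseteq> S \<inter> T"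
      using 1 2 open_Int[OF 1(1) 2(1)] countable_Un[OF 1(3) 2(3)]
      by (intro exI[of _ "W1 \<inter> W2"] exI[of _ "C1 \<union> C2"]) simp
  qed
next
  fix K assume K: "\<forall>K\<in>K. QD_open D K"
  show "QD_open D (\<Union>K)"
  proof (rule QD_openI)
    show "\<Union>K \<subseteq> range Inl \<union> Inr ` D" using K QD_openD1 by blast
    fix q assume "Inl q \<in> \<Union>K"
    then obtain U where U: "U \<in> K" "Inl q \<in> U" by blast
    have QU: "QD_open D U" using K U(1) by blast
    obtain W C where WC: "open W" "real_of_rat q \<in> W" "countable C" "C \<subseteq> D"
       "Inl ` {r. real_of_rat r \<in> W} \<union> Inr ` (D - C) \<subseteq> U"
      using QD_openD2[OF QU U(2)] by blast
    have "U \<subseteq> \<Union>K" using U(1) by (rule Union_upper)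
    then show "\<exists>W C. open W \<and> real_of_rat q \<in> W \<and> countable C \<and> C \<subseteq> D \<and>
           Inl ` {r. real_of_rat r \<in> W} \<union> Inr ` (D - C) \<subseteq> \<Union>K"
      using WC by (intro exI[of _ W] exI[of _ C]) auto
  qed
qed

lemma openin_QD: "openin (QD_topology D) U \<longleftrightarrow> QD_open D U"
  by (simp add: QD_topology_def QD_istopology)

lemma QD_open_space: "QD_open D (range Inl \<union> Inr ` D)"
  unfolding QD_open_def by (rule conjI, simp, intro allI impI exI[of _ UNIV] exI[of _ "{}"]) auto

lemma topspace_QD: "topspace (QD_topology D) = range Inl \<union> Inr ` D"
proof
  show "topspace (QD_topology D) \<subseteq> range Inl \<union> Inr ` D"
    unfolding topspace_def openin_QD QD_open_def by blast
  show "range Inl \<union> Inr ` D \<subseteq> topspace (QD_topology D)"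
    using QD_open_space openin_subset openin_QD by metis
qed

lemma open_Inr: "U \<subseteq> Inr ` D \<Longrightarrow> openin (QD_topology D) U"
  unfolding openin_QD QD_open_def by auto

lemma open_delete_Inl: "openin (QD_topology D) (range Inl \<union> Inr ` D - {Inl r})"
  unfolding openin_QD
proof (rule QD_openI)
  fix q :: rat assume q: "Inl q \<in> range Inl \<union> Inr ` D - {Inl r}"
  have "Inl ` {s. real_of_rat s \<in> - {real_of_rat r}} \<union> Inr ` (D - {}) \<subseteq> range Inl \<union> Inr ` D - {Inl r}"
    by auto
  moreover have "real_of_rat q \<in> - {real_of_rat r}" using q by auto
  ultimately show "\<exists>W C. open W \<and> real_of_rat q \<in> W \<and> countable C \<and> C \<subseteq> D \<and>
           Inl ` {s. real_of_rat s \<in> W} \<union> Inr ` (D - C) \<subseteq> range Inl \<union> Inr ` D - {Inl r}"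
    by (intro exI[of _ "- {real_of_rat r}"] exI[of _ "{}"]) (simp add: open_Compl)
qed auto

lemma open_delete_Inr: "openin (QD_topology D) (range Inl \<union> Inr ` D - {Inr d})"
  unfolding openin_QD
proof (rule QD_openI)
  fix q :: rat assume q: "Inl q \<in> range Inl \<union> Inr ` D - {Inr d}"
  have "Inl ` {s. real_of_rat s \<in> UNIV} \<union> Inr ` (D - {d} \<inter> D) \<subseteq> range Inl \<union> Inr ` D - {Inr d}"
    by auto
  then show "\<exists>W C. open W \<and> real_of_rat q \<in> W \<and> countable C \<and> C \<subseteq> D \<and>
           Inl ` {s. real_of_rat s \<in> W} \<union> Inr ` (D - C) \<subseteq> range Inl \<union> Inr ` D - {Inr d}"
    by (intro exI[of _ UNIV] exI[of _ "{d} \<inter> D"]) simp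
qed auto

lemma t1_QD: fixes D :: "'d set" shows "t1_space (QD_topology D)"
  unfolding t1_space_def topspace_QD
proof (intro ballI impI)
  fix x y :: "rat + 'd" assume x: "x \<in> range Inl \<union> Inr ` D" and y: "y \<in> range Inl \<union> Inr ` D" and xy: "x \<noteq> y"
  show "\<exists>U. openin (QD_topology D) U \<and> x \<in> U \<and> y \<notin> U"
  proof (cases y)
    case (Inl r)
    then show ?thesis using open_delete_Inl[of D r] x xy by blast
  next
    case (Inr d)
    then show ?thesis using open_delete_Inr[of D d] x xy by blast
  qed
qed

definition tauQD :: "(rat + 'd) \<Rightarrow> (rat + 'd) set \<Rightarrow> (rat + 'd) set" where
  "tauQD x V = (case x of Inl q \<Rightarrow> V | Inr d \<Rightarrow> {x})"

lemma tauQD_legal: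
  assumes a: "openin (QD_topology D) V" "x \<in> V"
  shows "openin (QD_topology D) (tauQD x V) \<and> x \<in> tauQD x V \<and> tauQD x V \<subseteq> V"
proof (cases x)
  case (Inl q) then show ?thesis using a by (simp add: tauQD_def)
next
  case (Inr d)
  have "x \<in> topspace (QD_topology D)" using a openin_subset by blast
  then have "d \<in> D" using Inr by (auto simp: topspace_QD)
  then show ?thesis using a Inr open_Inr[of "{Inr d}" D] by (simp add: tauQD_def)
qed

lemma last_map_upt: "last (map f [0..<Suc n]) = f n"
  by simp

lemma choquet_QD:
  fixes D :: "'d set"
  assumes unc: "uncountable D"
  shows "choquet_alpha_winning (QD_topology D) (\<lambda>h. tauQD (fst (last h)) (snd (last h)))"
  unfolding choquet_alpha_winning_def
proof (intro conjI)
  show "\<forall>h x V. openin (QD_topology D) V \<and> x \<in> V \<longrightarrow>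
        openin (QD_topology D) (tauQD (fst (last (h @ [(x, V)]))) (snd (last (h @ [(x, V)])))) \<and>
        x \<in> tauQD (fst (last (h @ [(x, V)]))) (snd (last (h @ [(x, V)]))) \<and>
        tauQD (fst (last (h @ [(x, V)]))) (snd (last (h @ [(x, V)]))) \<subseteq> V"
    by (intro allI impI, simp, rule tauQD_legal) auto
  show "\<forall>(x :: nat \<Rightarrow> rat + 'd) V. (\<forall>n. openin (QD_topology D) (V n) \<and> x n \<in> V n) \<and>
        (\<forall>n. V (Suc n) \<subseteq> tauQD (fst (last (map (\<lambda>i. (x i, V i)) [0..<Suc n])))
                                (snd (last (map (\<lambda>i. (x i, V i)) [0..<Suc n])))) \<longrightarrow>
        (\<Inter>n. tauQD (fst (last (map (\<lambda>i. (x i, V i)) [0..<Suc n])))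
                 (snd (last (map (\<lambda>i. (x i, V i)) [0..<Suc n])))) \<noteq> {}"
  proof (intro allI impI)
    fix x :: "nat \<Rightarrow> rat + 'd" and V
    assume H: "(\<forall>n. openin (QD_topology D) (V n) \<and> x n \<in> V n) \<and>
        (\<forall>n. V (Suc n) \<subseteq> tauQD (fst (last (map (\<lambda>i. (x i, V i)) [0..<Suc n])))
                                (snd (last (map (\<lambda>i. (x i, V i)) [0..<Suc n]))))"
    define U where "U n = tauQD (x n) (V n)" for n
    have Ueq: "tauQD (fst (last (map (\<lambda>i. (x i, V i)) [0..<Suc n])))
                 (snd (last (map (\<lambda>i. (x i, V i)) [0..<Suc n]))) = U n" for n
      unfolding U_def last_map_upt by simp
    have op: "openin (QD_topology D) (V n)" and xV: "x n \<in> V n" for n using H by auto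
    have VU: "V (Suc n) \<subseteq> U n" for n using H Ueq by metis
    have UV: "U n \<subseteq> V n" and xU: "x n \<in> U n" for n
      using tauQD_legal[OF op xV] unfolding U_def by auto
    have dec: "U (Suc n) \<subseteq> U n" for n using UV VU by blast
    have decs: "m \<le> n \<Longrightarrow> U n \<subseteq> U m" for m n
      using decseq_SucI[of U] dec unfolding decseq_def by blast
    have "(\<Inter>n. U n) \<noteq> {}"
    proof (cases "\<exists>n d. x n = Inr d")
      case True
      then obtain n d where nd: "x n = Inr d" by blast
      have stay: "U (n + k) = {x n}" for k
      proof (induction k)
        case 0 then show ?case using nd by (simp add: U_def tauQD_def)
      next
        case (Suc k)
        have "x (Suc (n + k)) \<in> {x n}" using xV VU Suc by blast
        then have "x (Suc (n + k)) = Inr d" using nd by simp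
        then show ?case using nd by (simp add: U_def tauQD_def)
      qed
      have "x n \<in> U m" for m
      proof (cases "m \<le> n")
        case True then show ?thesis using decs xU by blast
      next
        case False
        then have "m = n + (m - n)" by simp
        then show ?thesis using stay[of "m - n"] by simp
      qed
      then show ?thesis by blast
    next
      case False
      then have Uv: "U n = V n" for n
        unfolding U_def tauQD_def by (cases "x n") auto
      have "\<exists>C. countable C \<and> C \<subseteq> D \<and> Inr ` (D - C) \<subseteq> V n" for n
      proof -
        obtain q where q: "x n = Inl q" using False by (cases "x n") auto
        have "QD_open D (V n)" using op openin_QD by blast
        moreover have "Inl q \<in> V n" using xV[of n] q by simp
        ultimately obtain W C where WC: "open W" "real_of_rat q \<in> W" "countable C" "C \<subseteq> D" "Inl ` {r. real_of_rat r \<in> W} \<union> Inr ` (D - C) \<subseteq> V n"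
          by (rule QD_openD2)
        have "Inr ` (D - C) \<subseteq> V n" using WC(5) by (rule subset_trans[OF Un_upper2])
        then show ?thesis using WC(3,4) by (intro exI[of _ C]) simp
      qed
      then have "\<forall>n. \<exists>C. countable C \<and> C \<subseteq> D \<and> Inr ` (D - C) \<subseteq> V n" by (rule allI)
      from choice[OF this] obtain C where C: "\<forall>n. countable (C n) \<and> C n \<subseteq> D \<and> Inr ` (D - C n) \<subseteq> V n"
        by (elim exE)
      have "countable (\<Union>n. C n)" using C by (intro countable_UN) simp_all
      moreover have "D - (\<Union>n. C n) = {} \<Longrightarrow> D \<subseteq> (\<Union>n. C n)" by blast
      ultimately have "D - (\<Union>n. C n) \<noteq> {}" using unc countable_subset by metis
      then obtain d where "d \<in> D - (\<Union>n. C n)" by blast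
      then have "Inr d \<in> U n" for n
      proof -
        have "Inr d \<in> Inr ` (D - C n)" using \<open>d \<in> D - (\<Union>n. C n)\<close> by simp
        moreover have "Inr ` (D - C n) \<subseteq> V n" using C by simp
        ultimately show ?thesis unfolding Uv by (rule subsetD[rotated])
      qed
      then have "Inr d \<in> (\<Inter>n. U n)" by simp
      then show ?thesis by auto
    qed
    then show "(\<Inter>n. tauQD (fst (last (map (\<lambda>i. (x i, V i)) [0..<Suc n])))
                 (snd (last (map (\<lambda>i. (x i, V i)) [0..<Suc n])))) \<noteq> {}"
      unfolding Ueq .
  qed
qed

lemma rat_near:
  assumes "open W" "real_of_rat r \<in> W"
  shows "\<exists>s. s \<noteq> r \<and> real_of_rat s \<in> W"
proof -
  obtain e where e: "e > 0" "ball (real_of_rat r) e \<subseteq> W"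
    using assms openE by blast
  obtain n where n: "n > 0" "inverse (real n) < e" using ex_inverse_of_nat_less e(1) by blast
  define s where "s = r + inverse (of_nat n)"
  have rs: "real_of_rat s = real_of_rat r + inverse (real n)"
    unfolding s_def by (simp add: of_rat_add of_rat_inverse)
  have "dist (real_of_rat r) (real_of_rat s) < e" unfolding rs dist_real_def using n by simp
  then have "real_of_rat s \<in> W" using e(2) by (simp add: subset_iff)
  moreover have "s \<noteq> r" unfolding s_def using n(1) by simp
  ultimately show ?thesis by blast
qed

lemma not_baire_QD:
  fixes D :: "'d set" and S :: "(rat + 'd) set"
  assumes S: "S \<subseteq> topspace (QD_topology D)" "range Inl \<subseteq> S"
    and sep: "separable_space (subtopology (QD_topology D) S)"
  shows "\<not> baire_space (subtopology (QD_topology D) S)"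
proof -
  let ?T = "QD_topology D"
  let ?Y = "subtopology ?T S"
  let ?X = "range Inl \<union> Inr ` D :: (rat + 'd) set"
  have SX: "S \<subseteq> ?X" using S(1) by (simp add: topspace_QD)
  have tY: "topspace ?Y = S" using S(1) by (rule topspace_subtopology_subset)
  obtain C where C: "countable C" "C \<subseteq> topspace ?Y" "?Y closure_of C = topspace ?Y"
    using sep unfolding separable_space_def by blast
  define E where "E = {d \<in> D. Inr d \<in> S}"
  have EC: "Inr ` E \<subseteq> C"
  proof
    fix y :: "rat + 'd" assume "y \<in> Inr ` E"
    then obtain d where d: "y = Inr d" "d \<in> D" "Inr d \<in> S" unfolding E_def by blast
    have "openin ?T {Inr d}" using d(2) by (intro open_Inr) simp
    then have "openin ?Y {Inr d}" unfolding openin_subtopology using d(3) by (intro exI[of _ "{Inr d}"]) simp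
    moreover have "Inr d \<in> ?Y closure_of C" using C(3) tY d(3) by simp
    moreover have "(Inr d :: rat + 'd) \<in> {Inr d}" by simp
    ultimately have "\<exists>z. z \<in> C \<and> z \<in> {Inr d}" unfolding in_closure_of by (meson conjunct2)
    then show "y \<in> C" using d(1) by simp
  qed
  have cE: "countable E"
  proof -
    have "countable ((Inr :: 'd \<Rightarrow> rat + 'd) ` E)" by (rule countable_subset[OF EC C(1)])
    moreover have "inj_on (Inr :: 'd \<Rightarrow> rat + 'd) E" by (simp add: inj_on_def)
    ultimately show ?thesis by (rule countable_image_inj_on)
  qed
  define G where "G n = S - {Inl (from_nat n :: rat)}" for n
  have Gopen: "openin ?Y (G n)" for n
  proof -
    have "G n = (?X - {Inl (from_nat n)}) \<inter> S" unfolding G_def using SX by blast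
    then show ?thesis unfolding openin_subtopology using open_delete_Inl by blast
  qed
  have Gdense: "?Y closure_of (G n) = topspace ?Y" for n
  proof
    show "?Y closure_of (G n) \<subseteq> topspace ?Y" by (rule closure_of_subset_topspace)
    show "topspace ?Y \<subseteq> ?Y closure_of (G n)"
    proof
      fix y assume yS: "y \<in> topspace ?Y"
      show "y \<in> ?Y closure_of (G n)"
      proof (cases "y = Inl (from_nat n)")
        case False
        then have "y \<in> G n" using yS tY unfolding G_def by simp
        moreover have "G n \<subseteq> topspace ?Y" using tY unfolding G_def by blast
        ultimately show ?thesis using closure_of_subset by blast
      next
        case True
        show ?thesis unfolding in_closure_of
        proof (intro conjI allI impI)
          show "y \<in> topspace ?Y" by fact
          fix T' assume T': "y \<in> T' \<and> openin ?Y T'"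
          then obtain U where U: "openin ?T U" "T' = U \<inter> S" unfolding openin_subtopology by blast
          have QU: "QD_open D U" using U(1) openin_QD by blast
          have "Inl (from_nat n) \<in> U" using T' U(2) True by simp
          then obtain W C' where WC: "open W" "real_of_rat (from_nat n) \<in> W"
              "Inl ` {r. real_of_rat r \<in> W} \<union> Inr ` (D - C') \<subseteq> U"
            using QD_openD2[OF QU] by metis
          obtain s where s: "s \<noteq> from_nat n" "real_of_rat s \<in> W" using rat_near[OF WC(1,2)] by blast
          have "Inl s \<in> U" using WC(3) s(2) by blast
          moreover have "Inl s \<in> S" using S(2) by blast
          ultimately have "Inl s \<in> G n \<and> Inl s \<in> T'" using s(1) U(2) unfolding G_def by simp
          then show "\<exists>z. z \<in> G n \<and> z \<in> T'" by blast
        qed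
      qed
    qed
  qed
  have inter: "topspace ?Y \<inter> (\<Inter>n. G n) = S - range Inl"
  proof
    show "topspace ?Y \<inter> (\<Inter>n. G n) \<subseteq> S - range Inl"
    proof
      fix y assume y: "y \<in> topspace ?Y \<inter> (\<Inter>n. G n)"
      have "y \<notin> range Inl"
      proof
        assume "y \<in> range Inl"
        then obtain q where q: "y = Inl q" by blast
        have "y \<in> G (to_nat q)" using y by simp
        then show False using q unfolding G_def by simp
      qed
      then show "y \<in> S - range Inl" using y tY by simp
    qed
    show "S - range Inl \<subseteq> topspace ?Y \<inter> (\<Inter>n. G n)" using tY unfolding G_def by auto
  qed
  have notin: "Inl 0 \<notin> ?Y closure_of (S - range Inl)"
  proof
    assume a: "Inl 0 \<in> ?Y closure_of (S - range Inl)"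
    define O' :: "(rat + 'd) set" where "O' = range Inl \<union> Inr ` (D - E)"
    have "QD_open D O'"
    proof (rule QD_openI)
      show "O' \<subseteq> range Inl \<union> Inr ` D" unfolding O'_def by blast
      fix q :: rat assume "Inl q \<in> O'"
      have "Inl ` {r. real_of_rat r \<in> UNIV} \<union> Inr ` (D - E) \<subseteq> O'" unfolding O'_def by blast
      moreover have "E \<subseteq> D" unfolding E_def by blast
      ultimately show "\<exists>W C. open W \<and> real_of_rat q \<in> W \<and> countable C \<and> C \<subseteq> D \<and>
           Inl ` {r. real_of_rat r \<in> W} \<union> Inr ` (D - C) \<subseteq> O'"
        using cE by (intro exI[of _ UNIV] exI[of _ E]) simp
    qed
    then have "openin ?Y (O' \<inter> S)" unfolding openin_subtopology openin_QD by blast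
    moreover have "Inl 0 \<in> O' \<inter> S" using S(2) unfolding O'_def by blast
    ultimately obtain z where z: "z \<in> S - range Inl" "z \<in> O' \<inter> S"
      using a unfolding in_closure_of by blast
    then obtain d where d: "z = Inr d" by (cases z) auto
    then have "d \<in> D - E" using z(2) unfolding O'_def by auto
    moreover have "Inr d \<in> S" using z(1) d by simp
    ultimately show False unfolding E_def by simp
  qed
  have "Inl 0 \<in> topspace ?Y" using tY S(2) by blast
  then have "?Y closure_of (topspace ?Y \<inter> (\<Inter>n. G n)) \<noteq> topspace ?Y"
    using notin inter by auto
  then show ?thesis unfolding baire_space_def using Gopen Gdense by blast
qed

theorem mainTheorem7:
  fixes D :: "'d set"
  assumes "uncountable D"
  shows "t1_space (QD_topology D)
       \<and> strong_choquet_alpha_favorable (QD_topology D)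
       \<and> strong_choquet_alpha_last_move_favorable (QD_topology D)
       \<and> \<not> (\<exists>\<F>. rich_family_of_Baire (QD_topology D) \<F>)
       \<and> (\<forall>S. S \<subseteq> topspace (QD_topology D) \<and> range Inl \<subseteq> S
              \<and> separable_space (subtopology (QD_topology D) S)
              \<longrightarrow> \<not> baire_space (subtopology (QD_topology D) S))"
proof (intro conjI)
  show "t1_space (QD_topology D)" by (rule t1_QD)
  have ch: "choquet_alpha_winning (QD_topology D) (\<lambda>h. tauQD (fst (last h)) (snd (last h)))"
    using choquet_QD[OF assms] .
  then show "strong_choquet_alpha_favorable (QD_topology D)"
    unfolding strong_choquet_alpha_favorable_def by blast
  show "strong_choquet_alpha_last_move_favorable (QD_topology D)"
    unfolding strong_choquet_alpha_last_move_favorable_def using ch by blast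
  show nb: "\<forall>S. S \<subseteq> topspace (QD_topology D) \<and> range Inl \<subseteq> S
              \<and> separable_space (subtopology (QD_topology D) S)
              \<longrightarrow> \<not> baire_space (subtopology (QD_topology D) S)"
    using not_baire_QD by blast
  show "\<not> (\<exists>\<F>. rich_family_of_Baire (QD_topology D) \<F>)"
  proof
    assume "\<exists>\<F>. rich_family_of_Baire (QD_topology D) \<F>"
    then obtain F where F: "rich_family_of_Baire (QD_topology D) F" by blast
    let ?R = "range Inl :: (rat + 'd) set"
    have R: "?R \<subseteq> topspace (QD_topology D)" by (simp add: topspace_QD)
    have tR: "topspace (subtopology (QD_topology D) ?R) = ?R"
      using R by (rule topspace_subtopology_subset)
    have "separable_space (subtopology (QD_topology D) ?R)"
      unfolding separable_space_def
    proof (intro exI conjI)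
      show "countable ?R" by simp
      show "?R \<subseteq> topspace (subtopology (QD_topology D) ?R)" using tR by simp
      show "subtopology (QD_topology D) ?R closure_of ?R = topspace (subtopology (QD_topology D) ?R)"
        using closure_of_subset[of ?R "subtopology (QD_topology D) ?R"]
          closure_of_subset_topspace[of "subtopology (QD_topology D) ?R" ?R] tR by blast
    qed
    then obtain A where A: "A \<in> F" "?R \<subseteq> A"
      using F R unfolding rich_family_of_Baire_def by blast
    have "closedin (QD_topology D) A" "separable_space (subtopology (QD_topology D) A)"
         "baire_space (subtopology (QD_topology D) A)"
      using F A(1) unfolding rich_family_of_Baire_def by auto
    moreover have "A \<subseteq> topspace (QD_topology D)" using calculation(1) closedin_subset by blast
    ultimately show False using not_baire_QD A(2) by blast
  qed
qed

end
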